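(* Let $\mathscr H$ be a complex Hilbert space and $\mathbf{T}=(T_1,\dots,T_d)\in\mathbb{B}(\mathscr H)^d$ with $\|\mathbf{T}\|\neq 0$. Then $$\frac{1}{2\sqrt{d}}\Big(\|\mathbf{T}\|+\frac{c_e(\mathbf{T}^2)}{\|\mathbf{T}\|}\Big)\le w_e(\mathbf{T}).$$
   Context: $\mathbb{B}(\mathscr H)$ denotes the bounded linear operators on $\mathscr H$. For $\mathbf{T}=(T_1,\dots,T_d)\in\mathbb{B}(\mathscr H)^d$: the Euclidean operator radius is $w_e(\mathbf{T})=\sup\{(\sum_{k=1}^d|\langle T_kx,x\rangle|^2)^{1/2}: \|x\|=1\}$; the joint Crawford number is $c_e(\mathbf{T})=\inf\{(\sum_{k=1}^d|\langle T_kx,x\rangle|^2)^{1/2}: \|x\|=1\}$; the joint operator norm is $\|\mathbf{T}\|=\sup\{(\sum_{k=1}^d\|T_kx\|^2)^{1/2}: \|x\|=1\}$. Powers are componentwise: $\mathbf{T}^2=(T_1^2,\dots,T_d^2)$. *)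

theory Defs
  imports "HOL-Analysis.Analysis"
begin

class complex_hilbert = real_normed_vector + complete_space +
  fixes scaleC :: "complex \<Rightarrow> 'a \<Rightarrow> 'a"
    and cinner :: "'a \<Rightarrow> 'a \<Rightarrow> complex"
  assumes scaleC_add_right: "scaleC a (x + y) = scaleC a x + scaleC a y"
    and scaleC_add_left: "scaleC (a + b) x = scaleC a x + scaleC b x"
    and scaleC_scaleC: "scaleC a (scaleC b x) = scaleC (a * b) x"
    and scaleC_one: "scaleC 1 x = x"
    and scaleR_scaleC: "scaleR r x = scaleC (complex_of_real r) x"
    and cinner_commute: "cinner x y = cnj (cinner y x)"
    and cinner_add_left: "cinner (x + y) z = cinner x z + cinner y z"
    and cinner_scaleC_left: "cinner (scaleC a x) y = a * cinner x y"
    and cinner_self_real: "Im (cinner x x) = 0"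
    and cinner_self_nonneg: "0 \<le> Re (cinner x x)"
    and cinner_self_eq_zero: "cinner x x = 0 \<longleftrightarrow> x = 0"
    and norm_eq_sqrt_cinner: "norm x = sqrt (Re (cinner x x))"

definition bounded_clinear_op :: "('a::complex_hilbert \<Rightarrow> 'a) \<Rightarrow> bool" where
  "bounded_clinear_op T \<longleftrightarrow>
     (\<forall>x y. T (x + y) = T x + T y) \<and>
     (\<forall>c x. T (scaleC c x) = scaleC c (T x)) \<and>
     (\<exists>K. \<forall>x. norm (T x) \<le> norm x * K)"

text \<open>A d-tuple of operators is a function on the indices 0..d-1.\<close>

definition euclid_op_radius :: "nat \<Rightarrow> (nat \<Rightarrow> 'a::complex_hilbert \<Rightarrow> 'a) \<Rightarrow> real" where
  "euclid_op_radius d T =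
     (SUP x\<in>{x::'a. norm x = 1}. sqrt (\<Sum>k<d. (cmod (cinner (T k x) x))\<^sup>2))"

definition joint_crawford :: "nat \<Rightarrow> (nat \<Rightarrow> 'a::complex_hilbert \<Rightarrow> 'a) \<Rightarrow> real" where
  "joint_crawford d T =
     (INF x\<in>{x::'a. norm x = 1}. sqrt (\<Sum>k<d. (cmod (cinner (T k x) x))\<^sup>2))"

definition joint_op_norm :: "nat \<Rightarrow> (nat \<Rightarrow> 'a::complex_hilbert \<Rightarrow> 'a) \<Rightarrow> real" where
  "joint_op_norm d T =
     (SUP x\<in>{x::'a. norm x = 1}. sqrt (\<Sum>k<d. (norm (T k x))\<^sup>2))"

definition op_tuple_sq :: "(nat \<Rightarrow> 'a \<Rightarrow> 'a) \<Rightarrow> nat \<Rightarrow> 'a \<Rightarrow> 'a" where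
  "op_tuple_sq T = (\<lambda>k. T k \<circ> T k)"

end

theory Submission
  imports Defs
begin

lemma cinner_add_right: "cinner (x::'a::complex_hilbert) (y+z) = cinner x y + cinner x z"
  by (metis cinner_commute cinner_add_left complex_cnj_add)

lemma cinner_scaleC_right: "cinner (x::'a::complex_hilbert) (scaleC a y) = cnj a * cinner x y"
  by (metis cinner_commute cinner_scaleC_left complex_cnj_mult)

lemma cinner_zero_left[simp]: "cinner (0::'a::complex_hilbert) y = 0"
  using cinner_add_left[of "0::'a" 0 y] by simp

lemma cinner_zero_right[simp]: "cinner (y::'a::complex_hilbert) 0 = 0"
  by (metis cinner_commute cinner_zero_left complex_cnj_zero)

lemma cinner_self_norm: "cinner (x::'a::complex_hilbert) x = complex_of_real ((norm x)^2)"
proof -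
  have "(norm x)^2 = Re (cinner x x)" using norm_eq_sqrt_cinner[of x] cinner_self_nonneg[of x] by simp
  then show ?thesis using cinner_self_real[of x] by (simp add: complex_eq_iff)
qed

lemma cinner_expand: "cinner ((x::'a::complex_hilbert) + scaleC s y) (z + scaleC t u)
   = cinner x z + cnj t * cinner x u + s * cinner y z + s * cnj t * cinner y u"
  by (simp add: cinner_add_left cinner_add_right cinner_scaleC_left cinner_scaleC_right algebra_simps)

lemma cmod_sq_c: "complex_of_real (cmod z) * complex_of_real (cmod z) = z * cnj z"
  by (metis complex_norm_square power2_eq_square of_real_mult)

lemma norm_scaleC: "norm (scaleC a (x::'a::complex_hilbert)) = cmod a * norm x"
proof -
  have "cinner (scaleC a x) (scaleC a x) = a * cnj a * cinner x x"
    by (simp add: cinner_scaleC_left cinner_scaleC_right mult.assoc)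
  then have "complex_of_real ((norm (scaleC a x))^2) = a * cnj a * complex_of_real ((norm x)^2)"
    by (simp only: cinner_self_norm)
  also have "\<dots> = complex_of_real ((cmod a * norm x)^2)"
    by (simp only: complex_norm_square[symmetric] power_mult_distrib of_real_mult)
  finally have "(norm (scaleC a x))^2 = (cmod a * norm x)^2" by (simp only: of_real_eq_iff)
  then show ?thesis by (simp add: power2_eq_iff_nonneg)
qed

lemma cauchy_schwarz: "cmod (cinner (x::'a::complex_hilbert) y) \<le> norm x * norm y"
proof (cases "y = 0")
  case True then show ?thesis by simp
next
  case False
  define t where "t = cinner x y / cinner y y"
  have ny: "norm y > 0" using False by simp
  have yy: "cinner y y = of_real ((norm y)^2)" by (rule cinner_self_norm)
  have "0 \<le> Re (cinner (x + scaleC (-t) y) (x + scaleC (-t) y))" by (rule cinner_self_nonneg)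
  also have "cinner (x + scaleC (-t) y) (x + scaleC (-t) y)
     = cinner x x - cnj t * cinner x y - t * cinner y x + t * cnj t * cinner y y"
    by (simp add: cinner_expand)
  also have "\<dots> = of_real ((norm x)^2) - of_real ((cmod (cinner x y))^2 / (norm y)^2)"
    using ny unfolding t_def yy cinner_self_norm[of x]
    apply (subst cinner_commute[of y x])
    apply (simp add: field_simps cmod_sq_c power2_eq_square)
    done
  finally have "(cmod (cinner x y))^2 / (norm y)^2 \<le> (norm x)^2" by simp
  then have "(cmod (cinner x y))^2 \<le> (norm x * norm y)^2" using ny
    by (simp add: field_simps power_mult_distrib)
  then show ?thesis by (rule power2_le_imp_le) simp
qed


lemma sigma_exists: "\<exists>\<sigma>::complex. cmod \<sigma> = 1 \<and> \<sigma> * \<sigma> * \<beta> = complex_of_real (cmod \<beta>)"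
proof (cases "\<beta> = 0")
  case True then show ?thesis by (intro exI[of _ 1]) simp
next
  case False
  define \<sigma> where "\<sigma> = csqrt (cnj \<beta> / complex_of_real (cmod \<beta>))"
  have nb: "cmod \<beta> > 0" using False by simp
  have "cmod (cnj \<beta> / complex_of_real (cmod \<beta>)) = 1" using nb by (simp add: norm_divide)
  then have 1: "cmod \<sigma> = 1" unfolding \<sigma>_def by simp
  have "\<sigma> * \<sigma> = cnj \<beta> / complex_of_real (cmod \<beta>)" unfolding \<sigma>_def
    by (metis power2_csqrt power2_eq_square)
  then have "\<sigma> * \<sigma> * \<beta> = (\<beta> * cnj \<beta>) / complex_of_real (cmod \<beta>)" by simp
  also have "\<dots> = complex_of_real (cmod \<beta>)" using nb
    by (simp add: complex_norm_square[symmetric] power2_eq_square)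
  finally show ?thesis using 1 by blast
qed

lemma key:
  fixes T :: "'a::complex_hilbert \<Rightarrow> 'a"
  assumes add: "\<forall>x y. T (x+y) = T x + T y" and sc: "\<forall>c x. T (scaleC c x) = scaleC c (T x)"
    and w: "\<forall>u. cmod (cinner (T u) u) \<le> w * (norm u)^2" and nx: "norm x = 1" and r: "r > 0"
  shows "r * ((norm (T x))^2 + cmod (cinner (T (T x)) x)) \<le> w * (1 + r^2 * (norm (T x))^2)"
proof -
  define y where "y = T x"
  define \<beta> where "\<beta> = cinner (T y) x"
  define a where "a = norm y"
  obtain \<sigma> where s1: "cmod \<sigma> = 1" and s2: "\<sigma> * \<sigma> * \<beta> = complex_of_real (cmod \<beta>)"
    using sigma_exists by blast
  define s where "s = complex_of_real r * \<sigma>"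
  have cs: "cmod s = r" using r s1 by (simp add: s_def norm_mult)
  have cs': "cmod (-s) = r" using cs by simp
  define f where "f = (\<lambda>t. cinner (T (x + scaleC t y)) (x + scaleC t y))"
  have Tl: "T (x + scaleC t y) = y + scaleC t (T y)" for t using add sc y_def by simp
  have fe: "f t = cinner y x + cnj t * cinner y y + t * \<beta> + t * cnj t * cinner (T y) y" for t
    unfolding f_def Tl \<beta>_def by (simp add: cinner_expand)
  have fd: "f s - f (-s) = 2 * (cnj s * cinner y y + s * \<beta>)"
    unfolding fe by (simp add: algebra_simps)
  have ne: "complex_of_real ((norm (x + scaleC t y))^2) = 1 + cnj t * cinner x y + t * cinner y x + t * cnj t * complex_of_real (a^2)" for t
  proof -
    have "cinner (x + scaleC t y) (x + scaleC t y) = cinner x x + cnj t * cinner x y + t * cinner y x + t * cnj t * cinner y y" by (rule cinner_expand)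
    then show ?thesis by (simp only: cinner_self_norm nx a_def) simp
  qed
  have nsum: "(norm (x + scaleC s y))^2 + (norm (x + scaleC (-s) y))^2 = 2 + 2 * r^2 * a^2"
  proof -
    have "complex_of_real ((norm (x + scaleC s y))^2 + (norm (x + scaleC (-s) y))^2)
        = 2 + 2 * (s * cnj s) * complex_of_real (a^2)"
      unfolding of_real_add ne by (simp add: algebra_simps)
    also have "\<dots> = complex_of_real (2 + 2 * r^2 * a^2)"
      by (simp add: complex_norm_square[symmetric] cs)
    finally show ?thesis by (simp only: of_real_eq_iff)
  qed
  have "cmod (f s - f (-s)) \<le> cmod (f s) + cmod (f (-s))" by (rule norm_triangle_ineq4)
  also have "\<dots> \<le> w * (norm (x + scaleC s y))^2 + w * (norm (x + scaleC (-s) y))^2"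
    unfolding f_def using w by (intro add_mono) auto
  also have "\<dots> = w * (2 + 2 * r^2 * a^2)" using nsum by (metis distrib_left)
  finally have A: "cmod (f s - f (-s)) \<le> w * (2 + 2 * r^2 * a^2)" .
  have "\<sigma> * (cnj s * cinner y y + s * \<beta>) = complex_of_real r * (\<sigma> * cnj \<sigma>) * complex_of_real (a^2) + complex_of_real r * (\<sigma> * \<sigma> * \<beta>)"
    by (simp add: s_def cinner_self_norm a_def algebra_simps)
  also have "\<dots> = complex_of_real (r * a^2 + r * cmod \<beta>)"
    by (simp add: s2 complex_norm_square[symmetric] s1)
  finally have B: "\<sigma> * (cnj s * cinner y y + s * \<beta>) = complex_of_real (r * a^2 + r * cmod \<beta>)" .
  have "cmod (f s - f (-s)) = 2 * cmod (\<sigma> * (cnj s * cinner y y + s * \<beta>))"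
    unfolding fd norm_mult s1 by simp
  also have "\<dots> = 2 * (r * a^2 + r * cmod \<beta>)"
  proof -
    have nn: "0 \<le> r * a^2 + r * cmod \<beta>" using r by simp
    show ?thesis unfolding B norm_of_real using nn by simp
  qed
  finally have "2 * (r * a^2 + r * cmod \<beta>) \<le> w * (2 + 2 * r^2 * a^2)" using A by simp
  then show ?thesis unfolding a_def \<beta>_def y_def by (simp add: algebra_simps)
qed


theorem theorem2p4:
  fixes d :: nat and T :: "nat \<Rightarrow> 'a::complex_hilbert \<Rightarrow> 'a"
  assumes "\<exists>x::'a. x \<noteq> 0"
    and "\<forall>k<d. bounded_clinear_op (T k)"
    and "joint_op_norm d T \<noteq> 0"
  shows "1 / (2 * sqrt (real d)) *
           (joint_op_norm d T + joint_crawford d (op_tuple_sq T) / joint_op_norm d T)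
         \<le> euclid_op_radius d T"
proof -
  define S where "S = {x::'a. norm x = 1}"
  define A where "A = (\<lambda>x::'a. sqrt (\<Sum>k<d. (norm (T k x))\<^sup>2))"
  define W where "W = (\<lambda>x::'a. sqrt (\<Sum>k<d. (cmod (cinner (T k x) x))\<^sup>2))"
  define B where "B = (\<lambda>x::'a. sqrt (\<Sum>k<d. (cmod (cinner (T k (T k x)) x))\<^sup>2))"
  define N where "N = joint_op_norm d T"
  define w where "w = euclid_op_radius d T"
  define c where "c = joint_crawford d (op_tuple_sq T)"
  have N_def': "N = (SUP x\<in>S. A x)" unfolding N_def joint_op_norm_def S_def A_def ..
  have w_def': "w = (SUP x\<in>S. W x)" unfolding w_def euclid_op_radius_def S_def W_def ..
  have c_def': "c = (INF x\<in>S. B x)" unfolding c_def joint_crawford_def S_def B_def op_tuple_sq_def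
    by simp
  obtain x1 :: 'a where "x1 \<noteq> 0" using assms(1) by blast
  define x0 where "x0 = scaleR (1 / norm x1) x1"
  have x0S: "x0 \<in> S" unfolding S_def x0_def using \<open>x1 \<noteq> 0\<close> by simp
  have Sne: "S \<noteq> {}" using x0S by blast
  have add: "\<And>k x y. k < d \<Longrightarrow> T k (x + y) = T k x + T k y"
    using assms(2) unfolding bounded_clinear_op_def by blast
  have sc: "\<And>k a x. k < d \<Longrightarrow> T k (scaleC a x) = scaleC a (T k x)"
    using assms(2) unfolding bounded_clinear_op_def by blast
  have "\<forall>k. \<exists>K. k < d \<longrightarrow> (\<forall>x. norm (T k x) \<le> norm x * K)"
    using assms(2) unfolding bounded_clinear_op_def by blast
  then obtain K where K: "\<And>k x. k < d \<Longrightarrow> norm (T k x) \<le> norm x * K k" by metis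
  have K1: "norm (T k x) \<le> K k" if "k < d" "x \<in> S" for k x
    using K[OF that(1), of x] that(2) unfolding S_def by simp
  define KB where "KB = sqrt (\<Sum>k<d. (K k)\<^sup>2)"
  have bA: "bdd_above (A ` S)"
  proof (rule bdd_aboveI2)
    fix x assume "x \<in> S"
    show "A x \<le> KB" unfolding A_def KB_def
      by (intro real_sqrt_le_mono sum_mono power_mono K1 \<open>x \<in> S\<close>) auto
  qed
  have bW: "bdd_above (W ` S)"
  proof (rule bdd_aboveI2)
    fix x assume xS: "x \<in> S"
    have "cmod (cinner (T k x) x) \<le> K k" if "k < d" for k
    proof -
      have "cmod (cinner (T k x) x) \<le> norm (T k x) * norm x" by (rule cauchy_schwarz)
      also have "\<dots> \<le> K k" using K1[OF that xS] xS unfolding S_def by simp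
      finally show ?thesis .
    qed
    then show "W x \<le> KB" unfolding W_def KB_def
      by (intro real_sqrt_le_mono sum_mono power_mono) auto
  qed
  have bB: "bdd_below (B ` S)" by (rule bdd_belowI2[of _ 0]) (simp add: B_def sum_nonneg)
  have AN: "A x \<le> N" if "x \<in> S" for x unfolding N_def' using bA that by (rule cSUP_upper2) simp
  have Ww: "W x \<le> w" if "x \<in> S" for x unfolding w_def' using bW that by (rule cSUP_upper2) simp
  have cB: "c \<le> B x" if "x \<in> S" for x unfolding c_def' using bB that by (rule cINF_lower2) simp
  have A0: "0 \<le> A x" for x unfolding A_def by (simp add: sum_nonneg)
  have Npos: "N > 0" using AN[OF x0S] A0[of x0] assms(3) unfolding N_def[symmetric] by linarith
  have dpos: "d > 0"
  proof (rule ccontr)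
    assume "\<not> d > 0"
    then have "A = (\<lambda>x. 0)" unfolding A_def by simp
    then have "N = 0" unfolding N_def' using Sne by simp
    then show False using Npos by simp
  qed
  have wu: "cmod (cinner (T k u) u) \<le> w * (norm u)\<^sup>2" if k: "k < d" for k u
  proof (cases "u = 0")
    case True
    have "T k 0 = 0" using add[OF k, of 0 0] by simp
    then show ?thesis using True by simp
  next
    case False
    define n where "n = norm u"
    have n: "n > 0" using False by (simp add: n_def)
    define v where "v = scaleC (complex_of_real (1/n)) u"
    have vS: "v \<in> S" unfolding S_def v_def using n by (simp add: norm_scaleC n_def norm_divide)
    have "cinner (T k v) v = complex_of_real (1/n) * complex_of_real (1/n) * cinner (T k u) u"
      unfolding v_def sc[OF k] by (simp add: cinner_scaleC_left cinner_scaleC_right)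
    then have eq: "cmod (cinner (T k v) v) = cmod (cinner (T k u) u) / n^2"
      using n by (simp add: norm_mult norm_divide power2_eq_square)
    have "cmod (cinner (T k v) v) \<le> W v" unfolding W_def
      using member_le_L2_set[of "{..<d}" k "\<lambda>k. cmod (cinner (T k v) v)"] k
      by (simp add: L2_set_def)
    also have "\<dots> \<le> w" using Ww[OF vS] .
    finally have "cmod (cinner (T k u) u) / n^2 \<le> w" using eq by simp
    then show ?thesis using n by (simp add: n_def[symmetric] divide_le_eq mult.commute)
  qed
  have main: "r * ((A x)\<^sup>2 + c) \<le> w * (real d + r^2 * (A x)\<^sup>2)" if xS: "x \<in> S" and r: "r > 0" for x r
  proof -
    have nx: "norm x = 1" using xS unfolding S_def by simp
    have per: "r * ((norm (T k x))^2 + cmod (cinner (T k (T k x)) x)) \<le> w * (1 + r^2 * (norm (T k x))^2)"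
      if k: "k < d" for k
      by (rule key) (use add[OF k] sc[OF k] wu[OF k] nx r in auto)
    have "r * (\<Sum>k<d. (norm (T k x))^2 + cmod (cinner (T k (T k x)) x)) \<le> (\<Sum>k<d. w * (1 + r^2 * (norm (T k x))^2))"
      unfolding sum_distrib_left using per by (intro sum_mono) auto
    also have "\<dots> = w * (real d + r^2 * (\<Sum>k<d. (norm (T k x))^2))"
      by (simp add: sum_distrib_left[symmetric] sum.distrib distrib_left)
    finally have s1: "r * ((\<Sum>k<d. (norm (T k x))^2) + (\<Sum>k<d. cmod (cinner (T k (T k x)) x))) \<le> w * (real d + r^2 * (\<Sum>k<d. (norm (T k x))^2))"
      by (simp add: sum.distrib)
    have A2: "(A x)^2 = (\<Sum>k<d. (norm (T k x))^2)" unfolding A_def by (simp add: sum_nonneg)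
    have "c \<le> B x" using cB[OF xS] .
    also have "B x \<le> (\<Sum>k<d. cmod (cinner (T k (T k x)) x))"
      unfolding B_def using L2_set_le_sum[of "{..<d}" "\<lambda>k. cmod (cinner (T k (T k x)) x)"]
      by (simp add: L2_set_def)
    finally have "c \<le> (\<Sum>k<d. cmod (cinner (T k (T k x)) x))" .
    then have "r * ((A x)\<^sup>2 + c) \<le> r * ((\<Sum>k<d. (norm (T k x))^2) + (\<Sum>k<d. cmod (cinner (T k (T k x)) x)))"
      unfolding A2 using r by (intro mult_left_mono) auto
    then show ?thesis using s1 A2 by simp
  qed
  define r where "r = sqrt (real d) / N"
  have r: "r > 0" unfolding r_def using dpos Npos by simp
  define C where "C = r * c - w * real d"
  define kk where "kk = w * r^2 - r"
  have CA: "C \<le> kk * (A x)^2" if "x \<in> S" for x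
    using main[OF that r] unfolding C_def kk_def by (simp add: algebra_simps)
  have CN: "C \<le> kk * N^2"
  proof (cases "kk \<ge> 0")
    case True
    have "(A x0)^2 \<le> N^2" using AN[OF x0S] A0[of x0] by (simp add: power_mono)
    then have "kk * (A x0)^2 \<le> kk * N^2" using True by (rule mult_left_mono)
    then show ?thesis using CA[OF x0S] by linarith
  next
    case False
    then have kn: "kk < 0" by simp
    have Ale: "(A x)^2 \<le> C / kk" if "x \<in> S" for x
      using CA[OF that] kn by (simp add: pos_le_divide_eq neg_le_divide_eq mult.commute)
    have "0 \<le> C / kk" using Ale[OF x0S] by (meson order_trans zero_le_power2)
    have "A x \<le> sqrt (C / kk)" if "x \<in> S" for x
      using Ale[OF that] A0[of x] by (metis real_sqrt_le_mono real_sqrt_pow2_iff real_sqrt_abs abs_of_nonneg power2_eq_square real_sqrt_mult_self)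
    then have "N \<le> sqrt (C / kk)" unfolding N_def' using Sne by (intro cSUP_least) auto
    then have "N^2 \<le> C / kk" using Npos \<open>0 \<le> C / kk\<close>
      by (metis less_imp_le power_mono real_sqrt_pow2)
    then show ?thesis using kn by (simp add: neg_le_divide_eq mult.commute)
  qed
  have sd: "sqrt (real d) > 0" using dpos by simp
  have r2N: "r^2 * N^2 = real d" unfolding r_def using Npos by (simp add: power_divide)
  have rN: "r * N^2 = sqrt (real d) * N" unfolding r_def using Npos by (simp add: power2_eq_square)
  have "r * c - w * real d \<le> w * real d - sqrt (real d) * N"
  proof -
    have "kk * N^2 = w * (r^2 * N^2) - r * N^2" by (simp add: kk_def algebra_simps)
    then show ?thesis using CN unfolding C_def r2N rN by linarith
  qed
  then have "sqrt (real d) * (c / N) + sqrt (real d) * N \<le> 2 * w * real d"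
    unfolding r_def by (simp add: algebra_simps)
  also have "\<dots> = sqrt (real d) * (2 * sqrt (real d) * w)"
    by (simp add: algebra_simps)
  finally have X: "sqrt (real d) * (N + c / N) \<le> sqrt (real d) * (2 * sqrt (real d) * w)"
    by (simp only: distrib_left add.commute)
  have "N + c / N \<le> 2 * sqrt (real d) * w" by (rule mult_left_le_imp_le[OF X sd])
  then show ?thesis unfolding N_def[symmetric] c_def[symmetric] w_def[symmetric]
    using sd by (simp add: divide_le_eq mult.commute mult.left_commute)
qed

end
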